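(* Let $\mathcal{X}\subseteq\mathbb{R}^d$ be closed and convex, let $f:\mathcal{X}\to\mathbb{R}$ be convex and continuously differentiable with a minimizer $x^\ast\in\mathcal{X}$, and let $h:\mathcal{X}\to\mathbb{R}$ be strictly convex and continuously differentiable. Let $\alpha,\beta:\mathbb{R}\to\mathbb{R}$ be smooth, with $\beta$ nondecreasing and $\dot\beta_t\le e^{\alpha_t}$ for all $t$. Let $t\mapsto X_t\in\mathcal{X}$ be a differentiable curve such that $Z_t:=X_t+e^{-\alpha_t}\dot X_t\in\mathcal{X}$, $t\mapsto Z_t$ and $t\mapsto\nabla h(Z_t)$ are differentiable, and $$\frac{d}{dt}\nabla h(Z_t)=-e^{\alpha_t+\beta_t}\nabla f(X_t).$$ Then, for $x=x^\ast$, $$\frac{d}{dt}D_h(x,Z_t)\le-\frac{d}{dt}\Big\{e^{\beta_t}\big(f(X_t)-f(x)\big)\Big\};$$ if moreover $\dot\beta_t=e^{\alpha_t}$ for all $t$, this inequality holds for every $x\in\mathcal{X}$. Consequently $\mathcal{E}_t=D_h(x,Z_t)+e^{\beta_t}(f(X_t)-f(x))$ is nonincreasing in $t$ for $x=x^\ast$ (and for every $x\in\mathcal{X}$ when $\dot\beta_t=e^{\alpha_t}$).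
   Context: $D_h(y,x)=h(y)-h(x)-\langle\nabla h(x),y-x\rangle$ is the Bregman divergence of $h$; $\|\cdot\|$ is the Euclidean norm. *)

theory Defs
  imports "HOL-Analysis.Analysis"
begin

definition bregman :: "('a::real_inner \<Rightarrow> real) \<Rightarrow> ('a \<Rightarrow> 'a) \<Rightarrow> 'a \<Rightarrow> 'a \<Rightarrow> real" where
  "bregman h gh y x = h y - h x - inner (gh x) (y - x)"

definition strictly_convex_on :: "'a::real_vector set \<Rightarrow> ('a \<Rightarrow> real) \<Rightarrow> bool" where
  "strictly_convex_on S f \<longleftrightarrow>
     (\<forall>x\<in>S. \<forall>y\<in>S. x \<noteq> y \<longrightarrow> (\<forall>u::real. 0 < u \<and> u < 1 \<longrightarrow>
        f ((1 - u) *\<^sub>R x + u *\<^sub>R y) < (1 - u) * f x + u * f y))"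

definition smooth_real :: "(real \<Rightarrow> real) \<Rightarrow> bool" where
  "smooth_real g \<longleftrightarrow> (\<forall>n t. ((deriv ^^ n) g) differentiable (at t))"

definition C1_grad_on :: "'a::euclidean_space set \<Rightarrow> ('a \<Rightarrow> real) \<Rightarrow> ('a \<Rightarrow> 'a) \<Rightarrow> bool" where
  "C1_grad_on S f g \<longleftrightarrow>
     (\<forall>x\<in>S. (f has_derivative (\<lambda>v. inner (g x) v)) (at x within S)) \<and> continuous_on S g"

end

theory Submission imports Defs begin

lemma grad_ineq:
  fixes S :: "'a::euclidean_space set" and f :: "'a \<Rightarrow> real"
  assumes S: "convex S" and cf: "convex_on S f"
    and d: "(f has_derivative (\<lambda>v. inner g v)) (at y within S)"
    and y: "y \<in> S" and x: "x \<in> S"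
  shows "inner g (x - y) \<le> f x - f y"
proof -
  define p where "p u = y + u *\<^sub>R (x - y)" for u :: real
  have pS: "p ` {0..1} \<subseteq> S"
  proof
    fix z assume "z \<in> p ` {0..1}"
    then obtain u where u: "u \<in> {0..1}" "z = p u" by auto
    have "p u = (1 - u) *\<^sub>R y + u *\<^sub>R x" by (simp add: p_def algebra_simps)
    then show "z \<in> S" using u S x y by (auto intro: convexD_alt)
  qed
  have p0: "p 0 = y" by (simp add: p_def)
  have pd: "(p has_derivative (\<lambda>u. u *\<^sub>R (x - y))) (at 0 within {0..1})"
    unfolding p_def by (auto intro!: derivative_eq_intros)
  have "((\<lambda>u. f (p u)) has_derivative (\<lambda>u. inner g (u *\<^sub>R (x - y)))) (at 0 within {0..1})"
    by (rule has_derivative_in_compose[OF pd]) (use d has_derivative_subset pS p0 in auto)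
  moreover have e: "(\<lambda>u. inner g (u *\<^sub>R (x - y))) = (*) (inner g (x - y))" by (simp add: fun_eq_iff)
  ultimately have "((\<lambda>u. f (p u)) has_field_derivative inner g (x - y)) (at 0 within {0..1})"
    unfolding has_field_derivative_def by simp
  then have lim: "((\<lambda>u. (f (p u) - f y) / u) \<longlongrightarrow> inner g (x - y)) (at_right 0)"
    unfolding has_field_derivative_iff at_within_Icc_at_right[OF zero_less_one] p0 by simp
  have ev: "eventually (\<lambda>u. (f (p u) - f y) / u \<le> f x - f y) (at_right (0::real))"
    using eventually_at_right_real[OF zero_less_one]
  proof (rule eventually_mono)
    fix u :: real assume u: "u \<in> {0<..<1}"
    have "p u = (1 - u) *\<^sub>R y + u *\<^sub>R x" by (simp add: p_def algebra_simps)
    then have "f (p u) \<le> (1 - u) * f y + u * f x" using convex_onD[OF cf, of u y x] u x y by simp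
    then have "f (p u) - f y \<le> u * (f x - f y)" by (simp add: algebra_simps)
    then show "(f (p u) - f y) / u \<le> f x - f y" using u by (simp add: divide_le_eq mult.commute)
  qed
  show ?thesis by (rule tendsto_le[OF trivial_limit_at_right_real tendsto_const lim ev])
qed

lemma core:
  fixes S :: "'a::euclidean_space set"
    and f h :: "'a \<Rightarrow> real" and gf gh :: "'a \<Rightarrow> 'a"
    and \<alpha> \<beta> :: "real \<Rightarrow> real"
    and X X' Z :: "real \<Rightarrow> 'a"
  assumes S: "convex S"
    and f: "convex_on S f" "C1_grad_on S f gf"
    and h: "C1_grad_on S h gh"
    and bd: "\<beta> differentiable (at t)"
    and Xdiff: "\<forall>t. (X has_vector_derivative X' t) (at t)"
    and XS: "\<forall>t. X t \<in> S"
    and Zdef: "\<forall>t. Z t = X t + exp (- \<alpha> t) *\<^sub>R X' t"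
    and ZS: "\<forall>t. Z t \<in> S"
    and Zdiff: "\<forall>t. Z differentiable (at t)"
    and ghZ: "\<forall>t. ((\<lambda>s. gh (Z s)) has_vector_derivative
                   (- exp (\<alpha> t + \<beta> t)) *\<^sub>R gf (X t)) (at t)"
    and x: "x \<in> S"
  shows "\<exists>D E. ((\<lambda>s. bregman h gh x (Z s)) has_real_derivative D) (at t)
               \<and> ((\<lambda>s. exp (\<beta> s) * (f (X s) - f x)) has_real_derivative E) (at t)
               \<and> D + E \<le> exp (\<beta> t) * (f (X t) - f x) * (deriv \<beta> t - exp (\<alpha> t))"
proof -
  define Zd where "Zd = vector_derivative Z (at t)"
  have Zd: "(Z has_derivative (\<lambda>y. y *\<^sub>R Zd)) (at t)"
    using Zdiff vector_derivative_works unfolding Zd_def has_vector_derivative_def by blast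
  have hd: "\<And>y. y \<in> S \<Longrightarrow> (h has_derivative (\<lambda>v. inner (gh y) v)) (at y within S)"
    using h unfolding C1_grad_on_def by blast
  have fd: "\<And>y. y \<in> S \<Longrightarrow> (f has_derivative (\<lambda>v. inner (gf y) v)) (at y within S)"
    using f unfolding C1_grad_on_def by blast
  have hZ: "((\<lambda>s. h (Z s)) has_derivative (\<lambda>y. inner (gh (Z t)) (y *\<^sub>R Zd))) (at t)"
    by (rule has_derivative_in_compose2[of S h "\<lambda>y v. inner (gh y) v" Z UNIV, OF hd, simplified])
       (use ZS Zd in auto)
  have fX: "((\<lambda>s. f (X s)) has_derivative (\<lambda>y. inner (gf (X t)) (y *\<^sub>R X' t))) (at t)"
    by (rule has_derivative_in_compose2[of S f "\<lambda>y v. inner (gf y) v" X UNIV, OF fd, simplified])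
       (use XS Xdiff in \<open>auto simp: has_vector_derivative_def\<close>)
  define G where "G = (- exp (\<alpha> t + \<beta> t)) *\<^sub>R gf (X t)"
  have gZ: "((\<lambda>s. gh (Z s)) has_derivative (\<lambda>y. y *\<^sub>R G)) (at t)"
    using ghZ unfolding G_def has_vector_derivative_def by blast
  have ip: "((\<lambda>s. inner (gh (Z s)) (x - Z s)) has_derivative
      (\<lambda>y. inner (gh (Z t)) (- (y *\<^sub>R Zd)) + inner (y *\<^sub>R G) (x - Z t))) (at t)"
    by (rule bounded_bilinear.FDERIV[OF bounded_bilinear_inner gZ]) (auto intro!: derivative_eq_intros Zd)
  define DD where "DD = exp (\<alpha> t + \<beta> t) * inner (gf (X t)) (x - Z t)"
  have "((\<lambda>s. h x - h (Z s) - inner (gh (Z s)) (x - Z s)) has_derivative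
     (\<lambda>y. 0 - inner (gh (Z t)) (y *\<^sub>R Zd) - (inner (gh (Z t)) (- (y *\<^sub>R Zd)) + inner (y *\<^sub>R G) (x - Z t)))) (at t)"
    by (intro has_derivative_diff has_derivative_const hZ ip)
  moreover have "(\<lambda>y. 0 - inner (gh (Z t)) (y *\<^sub>R Zd) - (inner (gh (Z t)) (- (y *\<^sub>R Zd)) + inner (y *\<^sub>R G) (x - Z t)))
      = (*) DD" by (auto simp: fun_eq_iff DD_def G_def algebra_simps)
  ultimately have D: "((\<lambda>s. bregman h gh x (Z s)) has_real_derivative DD) (at t)"
    unfolding has_field_derivative_def bregman_def by simp
  have bD: "(\<beta> has_real_derivative deriv \<beta> t) (at t)"
    using bd DERIV_deriv_iff_real_differentiable by blast
  define EE where "EE = exp (\<beta> t) * deriv \<beta> t * (f (X t) - f x) + exp (\<beta> t) * inner (gf (X t)) (X' t)"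
  have fX': "((\<lambda>s. f (X s)) has_real_derivative inner (gf (X t)) (X' t)) (at t)"
  proof -
    have e: "(\<lambda>y. inner (gf (X t)) (y *\<^sub>R X' t)) = (*) (inner (gf (X t)) (X' t))"
      by (simp add: fun_eq_iff)
    show ?thesis using fX unfolding has_field_derivative_def e .
  qed
  have E: "((\<lambda>s. exp (\<beta> s) * (f (X s) - f x)) has_real_derivative EE) (at t)"
    unfolding EE_def by (auto intro!: derivative_eq_intros bD fX' simp: algebra_simps)
  have conv: "inner (gf (X t)) (x - X t) \<le> f x - f (X t)"
    by (rule grad_ineq[OF S f(1) fd]) (use XS x in auto)
  have X': "X' t = exp (\<alpha> t) *\<^sub>R (Z t - X t)"
    using Zdef by (simp add: exp_minus)
  have "DD + EE = exp (\<alpha> t + \<beta> t) * inner (gf (X t)) (x - X t) + exp (\<beta> t) * deriv \<beta> t * (f (X t) - f x)"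
    unfolding DD_def EE_def X' by (simp add: inner_diff_right exp_add algebra_simps)
  also have "\<dots> \<le> exp (\<alpha> t + \<beta> t) * (f x - f (X t)) + exp (\<beta> t) * deriv \<beta> t * (f (X t) - f x)"
    using conv by simp
  also have "\<dots> = exp (\<beta> t) * (f (X t) - f x) * (deriv \<beta> t - exp (\<alpha> t))"
    by (simp add: exp_add algebra_simps)
  finally show ?thesis using D E by blast
qed

lemma main_x:
  fixes S :: "'a::euclidean_space set"
    and f h :: "'a \<Rightarrow> real" and gf gh :: "'a \<Rightarrow> 'a"
    and \<alpha> \<beta> :: "real \<Rightarrow> real"
    and X X' Z :: "real \<Rightarrow> 'a"
  assumes S: "convex S"
    and f: "convex_on S f" "C1_grad_on S f gf"
    and h: "C1_grad_on S h gh"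
    and bd: "\<forall>t. \<beta> differentiable (at t)"
    and Xdiff: "\<forall>t. (X has_vector_derivative X' t) (at t)"
    and XS: "\<forall>t. X t \<in> S"
    and Zdef: "\<forall>t. Z t = X t + exp (- \<alpha> t) *\<^sub>R X' t"
    and ZS: "\<forall>t. Z t \<in> S"
    and Zdiff: "\<forall>t. Z differentiable (at t)"
    and ghZ: "\<forall>t. ((\<lambda>s. gh (Z s)) has_vector_derivative
                   (- exp (\<alpha> t + \<beta> t)) *\<^sub>R gf (X t)) (at t)"
    and x: "x \<in> S"
    and sgn: "\<forall>t. exp (\<beta> t) * (f (X t) - f x) * (deriv \<beta> t - exp (\<alpha> t)) \<le> 0"
  shows "(\<forall>t. \<exists>D E. ((\<lambda>s. bregman h gh x (Z s)) has_real_derivative D) (at t)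
                   \<and> ((\<lambda>s. exp (\<beta> s) * (f (X s) - f x)) has_real_derivative E) (at t)
                   \<and> D \<le> - E)
              \<and> antimono (\<lambda>t. bregman h gh x (Z t) + exp (\<beta> t) * (f (X t) - f x))"
proof -
  have c: "\<And>t. \<exists>D E. ((\<lambda>s. bregman h gh x (Z s)) has_real_derivative D) (at t)
               \<and> ((\<lambda>s. exp (\<beta> s) * (f (X s) - f x)) has_real_derivative E) (at t)
               \<and> D + E \<le> 0"
  proof -
    fix t
    from core[OF S f h bd[rule_format, of t] Xdiff XS Zdef ZS Zdiff ghZ x] obtain D E where
      "((\<lambda>s. bregman h gh x (Z s)) has_real_derivative D) (at t)"
      "((\<lambda>s. exp (\<beta> s) * (f (X s) - f x)) has_real_derivative E) (at t)"
      "D + E \<le> exp (\<beta> t) * (f (X t) - f x) * (deriv \<beta> t - exp (\<alpha> t))" by blast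
    moreover from this(3) sgn[rule_format, of t] have "D + E \<le> 0" by linarith
    ultimately show "\<exists>D E. ((\<lambda>s. bregman h gh x (Z s)) has_real_derivative D) (at t)
               \<and> ((\<lambda>s. exp (\<beta> s) * (f (X s) - f x)) has_real_derivative E) (at t)
               \<and> D + E \<le> 0" by blast
  qed
  have A: "\<forall>t. \<exists>D E. ((\<lambda>s. bregman h gh x (Z s)) has_real_derivative D) (at t)
                   \<and> ((\<lambda>s. exp (\<beta> s) * (f (X s) - f x)) has_real_derivative E) (at t)
                   \<and> D \<le> - E"
  proof
    fix t
    from c[of t] obtain D E where "((\<lambda>s. bregman h gh x (Z s)) has_real_derivative D) (at t)"
        "((\<lambda>s. exp (\<beta> s) * (f (X s) - f x)) has_real_derivative E) (at t)" "D + E \<le> 0" by blast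
    moreover from this(3) have "D \<le> - E" by linarith
    ultimately show "\<exists>D E. ((\<lambda>s. bregman h gh x (Z s)) has_real_derivative D) (at t)
                   \<and> ((\<lambda>s. exp (\<beta> s) * (f (X s) - f x)) has_real_derivative E) (at t)
                   \<and> D \<le> - E" by blast
  qed
  have B: "antimono (\<lambda>t. bregman h gh x (Z t) + exp (\<beta> t) * (f (X t) - f x))"
    unfolding antimono_def
  proof (intro allI impI)
    fix a b :: real assume ab: "a \<le> b"
    show "bregman h gh x (Z b) + exp (\<beta> b) * (f (X b) - f x) \<le> bregman h gh x (Z a) + exp (\<beta> a) * (f (X a) - f x)"
    proof (rule DERIV_nonpos_imp_nonincreasing[OF ab, of "\<lambda>t. bregman h gh x (Z t) + exp (\<beta> t) * (f (X t) - f x)"])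
      fix t
      from c[of t] obtain D E where "((\<lambda>s. bregman h gh x (Z s)) has_real_derivative D) (at t)"
        "((\<lambda>s. exp (\<beta> s) * (f (X s) - f x)) has_real_derivative E) (at t)" "D + E \<le> 0" by blast
      then show "\<exists>y. ((\<lambda>t. bregman h gh x (Z t) + exp (\<beta> t) * (f (X t) - f x)) has_real_derivative y) (at t) \<and> y \<le> 0"
        using DERIV_add by blast
    qed
  qed
  from A B show ?thesis by blast
qed
theorem proposition2:
  fixes S :: "'a::euclidean_space set"
    and f h :: "'a \<Rightarrow> real" and gf gh :: "'a \<Rightarrow> 'a"
    and xstar :: 'a
    and \<alpha> \<beta> :: "real \<Rightarrow> real"
    and X X' Z :: "real \<Rightarrow> 'a"
  assumes S: "closed S" "convex S"
    and f: "convex_on S f" "C1_grad_on S f gf"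
    and xstar: "xstar \<in> S" "\<forall>y\<in>S. f xstar \<le> f y"
    and h: "strictly_convex_on S h" "C1_grad_on S h gh"
    and ab: "smooth_real \<alpha>" "smooth_real \<beta>" "mono \<beta>" "\<forall>t. deriv \<beta> t \<le> exp (\<alpha> t)"
    and Xdiff: "\<forall>t. (X has_vector_derivative X' t) (at t)"
    and XS: "\<forall>t. X t \<in> S"
    and Zdef: "\<forall>t. Z t = X t + exp (- \<alpha> t) *\<^sub>R X' t"
    and ZS: "\<forall>t. Z t \<in> S"
    and Zdiff: "\<forall>t. Z differentiable (at t)"
    and ghZ: "\<forall>t. ((\<lambda>s. gh (Z s)) has_vector_derivative
                   (- exp (\<alpha> t + \<beta> t)) *\<^sub>R gf (X t)) (at t)"
  shows "(\<forall>t. \<exists>D E. ((\<lambda>s. bregman h gh xstar (Z s)) has_real_derivative D) (at t)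
               \<and> ((\<lambda>s. exp (\<beta> s) * (f (X s) - f xstar)) has_real_derivative E) (at t)
               \<and> D \<le> - E)
       \<and> antimono (\<lambda>t. bregman h gh xstar (Z t) + exp (\<beta> t) * (f (X t) - f xstar))
       \<and> ((\<forall>t. deriv \<beta> t = exp (\<alpha> t)) \<longrightarrow>
            (\<forall>x\<in>S.
              (\<forall>t. \<exists>D E. ((\<lambda>s. bregman h gh x (Z s)) has_real_derivative D) (at t)
                   \<and> ((\<lambda>s. exp (\<beta> s) * (f (X s) - f x)) has_real_derivative E) (at t)
                   \<and> D \<le> - E)
              \<and> antimono (\<lambda>t. bregman h gh x (Z t) + exp (\<beta> t) * (f (X t) - f x))))"
proof -
  have bd: "\<forall>t. \<beta> differentiable (at t)"
    using ab(2) unfolding smooth_real_def by (metis funpow_0)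
  note M = main_x[OF S(2) f h(2) bd Xdiff XS Zdef ZS Zdiff ghZ]
  have s1: "\<forall>t. exp (\<beta> t) * (f (X t) - f xstar) * (deriv \<beta> t - exp (\<alpha> t)) \<le> 0"
  proof
    fix t
    have "0 \<le> exp (\<beta> t) * (f (X t) - f xstar)" using xstar(2) XS by simp
    moreover have "deriv \<beta> t - exp (\<alpha> t) \<le> 0" using ab(4) by simp
    ultimately show "exp (\<beta> t) * (f (X t) - f xstar) * (deriv \<beta> t - exp (\<alpha> t)) \<le> 0"
      by (rule mult_nonneg_nonpos)
  qed
  note P1 = M[OF xstar(1) s1]
  show ?thesis
  proof (intro conjI impI ballI)
    show "\<forall>t. \<exists>D E. ((\<lambda>s. bregman h gh xstar (Z s)) has_real_derivative D) (at t)
               \<and> ((\<lambda>s. exp (\<beta> s) * (f (X s) - f xstar)) has_real_derivative E) (at t)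
               \<and> D \<le> - E" using P1 by blast
    show "antimono (\<lambda>t. bregman h gh xstar (Z t) + exp (\<beta> t) * (f (X t) - f xstar))" using P1 by blast
  next
    fix x assume eq: "\<forall>t. deriv \<beta> t = exp (\<alpha> t)" and x: "x \<in> S"
    have "\<forall>t. exp (\<beta> t) * (f (X t) - f x) * (deriv \<beta> t - exp (\<alpha> t)) \<le> 0" using eq by simp
    note P2 = M[OF x this]
    show "\<forall>t. \<exists>D E. ((\<lambda>s. bregman h gh x (Z s)) has_real_derivative D) (at t)
                   \<and> ((\<lambda>s. exp (\<beta> s) * (f (X s) - f x)) has_real_derivative E) (at t)
                   \<and> D \<le> - E" using P2 by blast
    show "antimono (\<lambda>t. bregman h gh x (Z t) + exp (\<beta> t) * (f (X t) - f x))" using P2 by blast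
  qed
qed

end
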